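(* For every $n$ there exists a dynamic graph on $n$ nodes (with integral initial loads) defined by an adaptive adversary such that no matching-based integral load balancing algorithm can reduce the maximal difference between loads in the graph below $n-1$, regardless of the running time; i.e., at every round $t$, $\max_{u,v}|w_t(u)-w_t(v)|\ge n-1$.
   Context: Integral load balancing: a fixed set of $n$ nodes with non-negative integer loads that must remain integers; the total load is preserved. The network is a dynamic graph, a sequence of connected graphs on the nodes, where the graph of each round may be chosen by an adaptive adversary after seeing everything that happened so far. In each round nodes may exchange information with all current neighbours; a matching-based algorithm is one in which, in each round, the pairs of nodes that exchange load form a matching of the current graph, and within each such pair the two nodes redistribute their combined load between them (as integers); nodes not in the matching keep their load. *)

theory Defs
  imports Main
begin

text \<open>Nodes are the naturals 0..n-1. A graph is an edge relation on nat.
  Loads are functions nat => nat (non-negative integers); only nodes < n matter.\<close>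

definition simple_graph_on :: "nat \<Rightarrow> (nat \<Rightarrow> nat \<Rightarrow> bool) \<Rightarrow> bool" where
  "simple_graph_on n E \<longleftrightarrow>
     (\<forall>u v. E u v \<longrightarrow> u < n \<and> v < n \<and> u \<noteq> v \<and> E v u)"

definition connected_graph_on :: "nat \<Rightarrow> (nat \<Rightarrow> nat \<Rightarrow> bool) \<Rightarrow> bool" where
  "connected_graph_on n E \<longleftrightarrow>
     simple_graph_on n E \<and> (\<forall>u<n. \<forall>v<n. E\<^sup>*\<^sup>* u v)"

definition is_matching :: "(nat \<Rightarrow> nat \<Rightarrow> bool) \<Rightarrow> (nat \<Rightarrow> nat \<Rightarrow> bool) \<Rightarrow> bool" where
  "is_matching E M \<longleftrightarrow>
     (\<forall>u v. M u v \<longrightarrow> E u v \<and> M v u) \<and>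
     (\<forall>u v v'. M u v \<and> M u v' \<longrightarrow> v = v')"

definition matching_step ::
  "(nat \<Rightarrow> nat \<Rightarrow> bool) \<Rightarrow> (nat \<Rightarrow> nat) \<Rightarrow> (nat \<Rightarrow> nat) \<Rightarrow> bool" where
  "matching_step E w w' \<longleftrightarrow>
     (\<exists>M. is_matching E M \<and>
          (\<forall>u. (\<nexists>v. M u v) \<longrightarrow> w' u = w u) \<and>
          (\<forall>u v. M u v \<longrightarrow> w' u + w' v = w u + w v))"

definition load_history :: "(nat \<Rightarrow> nat \<Rightarrow> nat) \<Rightarrow> nat \<Rightarrow> (nat \<Rightarrow> nat) list" where
  "load_history w t = map w [0..<Suc t]"

text \<open>An execution of some matching-based algorithm against the adaptive adversary adv
  (which maps the history of loads to the graph of the next round), from initial loads w0.\<close>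
definition execution ::
  "nat \<Rightarrow> ((nat \<Rightarrow> nat) list \<Rightarrow> (nat \<Rightarrow> nat \<Rightarrow> bool)) \<Rightarrow> (nat \<Rightarrow> nat) \<Rightarrow> (nat \<Rightarrow> nat \<Rightarrow> nat) \<Rightarrow> bool" where
  "execution n adv w0 w \<longleftrightarrow>
     w 0 = w0 \<and> (\<forall>t. matching_step (adv (load_history w t)) (w t) (w (Suc t)))"

definition discrepancy :: "nat \<Rightarrow> (nat \<Rightarrow> nat) \<Rightarrow> int" where
  "discrepancy n w = Max {int (w u) - int (w v) | u v. u < n \<and> v < n}"

end

theory Submission
  imports Defs
begin

definition pathE :: "nat \<Rightarrow> (nat \<Rightarrow> nat) \<Rightarrow> nat \<Rightarrow> nat \<Rightarrow> bool" where
  "pathE n \<sigma> u v \<longleftrightarrow> (\<exists>i. Suc i < n \<and> ((u = \<sigma> i \<and> v = \<sigma> (Suc i)) \<or> (v = \<sigma> i \<and> u = \<sigma> (Suc i))))"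

definition PS :: "(nat \<Rightarrow> nat) \<Rightarrow> (nat \<Rightarrow> nat) \<Rightarrow> nat \<Rightarrow> int" where
  "PS x \<sigma> k = (\<Sum>i<k. int (x (\<sigma> i)))"

definition Inv :: "nat \<Rightarrow> (nat \<Rightarrow> nat) \<Rightarrow> (nat \<Rightarrow> nat) \<Rightarrow> bool" where
  "Inv n x \<sigma> \<longleftrightarrow> bij_betw \<sigma> {..<n} {..<n} \<and>
     (\<forall>k\<le>n. 2 * PS x \<sigma> k \<le> int k * (int k - 1)) \<and> 2 * PS x \<sigma> n = int n * (int n - 1)"

lemma pathE_conn:
  assumes "bij_betw \<sigma> {..<n} {..<n}"
  shows "connected_graph_on n (pathE n \<sigma>)"
proof -
  have inj: "inj_on \<sigma> {..<n}" and img: "\<sigma> ` {..<n} = {..<n}"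
    using assms by (auto simp: bij_betw_def)
  have simple: "simple_graph_on n (pathE n \<sigma>)"
    unfolding simple_graph_on_def pathE_def
  proof (intro allI impI)
    fix u v assume "\<exists>i. Suc i < n \<and> (u = \<sigma> i \<and> v = \<sigma> (Suc i) \<or> v = \<sigma> i \<and> u = \<sigma> (Suc i))"
    then obtain i where i: "Suc i < n" "u = \<sigma> i \<and> v = \<sigma> (Suc i) \<or> v = \<sigma> i \<and> u = \<sigma> (Suc i)" by blast
    have a: "\<sigma> i < n" "\<sigma> (Suc i) < n" using img i(1) by auto
    have b: "\<sigma> i \<noteq> \<sigma> (Suc i)"
    proof
      assume "\<sigma> i = \<sigma> (Suc i)"
      then have "i = Suc i" using inj_onD[OF inj] i(1) by simp
      then show False by simp
    qed
    show "u < n \<and> v < n \<and> u \<noteq> v \<and> (\<exists>i. Suc i < n \<and> (v = \<sigma> i \<and> u = \<sigma> (Suc i) \<or> u = \<sigma> i \<and> v = \<sigma> (Suc i)))"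
    proof (intro conjI)
      show "u < n" "v < n" "u \<noteq> v" using i a b by auto
      show "\<exists>i. Suc i < n \<and> (v = \<sigma> i \<and> u = \<sigma> (Suc i) \<or> u = \<sigma> i \<and> v = \<sigma> (Suc i))"
        using i by blast
    qed
  qed
  have chain: "\<forall>i. i \<le> j \<longrightarrow> j < n \<longrightarrow> (pathE n \<sigma>)\<^sup>*\<^sup>* (\<sigma> i) (\<sigma> j) \<and> (pathE n \<sigma>)\<^sup>*\<^sup>* (\<sigma> j) (\<sigma> i)" for j
  proof (induction j)
    case 0
    then show ?case by auto
  next
    case (Suc j)
    show ?case
    proof (intro allI impI)
      fix i assume h: "i \<le> Suc j" "Suc j < n"
      have e1: "pathE n \<sigma> (\<sigma> j) (\<sigma> (Suc j))" and e2: "pathE n \<sigma> (\<sigma> (Suc j)) (\<sigma> j)"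
        using h(2) unfolding pathE_def by blast+
      show "(pathE n \<sigma>)\<^sup>*\<^sup>* (\<sigma> i) (\<sigma> (Suc j)) \<and> (pathE n \<sigma>)\<^sup>*\<^sup>* (\<sigma> (Suc j)) (\<sigma> i)"
      proof (cases "i = Suc j")
        case True then show ?thesis by auto
      next
        case False
        then have "i \<le> j" using h by auto
        then have "(pathE n \<sigma>)\<^sup>*\<^sup>* (\<sigma> i) (\<sigma> j) \<and> (pathE n \<sigma>)\<^sup>*\<^sup>* (\<sigma> j) (\<sigma> i)"
          using Suc.IH h by auto
        then show ?thesis using e1 e2
          by (meson converse_rtranclp_into_rtranclp rtranclp.rtrancl_into_rtrancl)
      qed
    qed
  qed
  have "(pathE n \<sigma>)\<^sup>*\<^sup>* u v" if "u < n" "v < n" for u v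
  proof -
    obtain i where i: "i < n" "u = \<sigma> i" using img \<open>u < n\<close> by (metis imageE lessThan_iff)
    obtain j where j: "j < n" "v = \<sigma> j" using img \<open>v < n\<close> by (metis imageE lessThan_iff)
    show ?thesis
    proof (cases "i \<le> j")
      case True then show ?thesis using chain[of j] i j by auto
    next
      case False then show ?thesis using chain[of i] i j by auto
    qed
  qed
  then show ?thesis using simple unfolding connected_graph_on_def by blast
qed

lemma pair_sum:
  fixes f :: "nat \<Rightarrow> int"
  assumes d: "\<And>i. R i \<Longrightarrow> \<not> R (Suc i)"
    and p: "\<And>i. R i \<Longrightarrow> f i + f (Suc i) = 0"
    and z: "\<And>i. i < m \<Longrightarrow> \<not> R i \<Longrightarrow> (i = 0 \<or> \<not> R (i - 1)) \<Longrightarrow> f i = 0"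
  shows "k \<le> m \<Longrightarrow> (\<Sum>i<k. f i) = (if k > 0 \<and> R (k - 1) then f (k - 1) else 0)"
proof (induction k)
  case 0 then show ?case by simp
next
  case (Suc k)
  then have IH: "(\<Sum>i<k. f i) = (if k > 0 \<and> R (k - 1) then f (k - 1) else 0)" by simp
  show ?case
  proof (cases "k > 0 \<and> R (k - 1)")
    case True
    then have "\<not> R k" using d[of "k-1"] by auto
    moreover have "f (k-1) + f k = 0" using p[of "k-1"] True by auto
    ultimately show ?thesis using IH True by simp
  next
    case False
    show ?thesis
    proof (cases "R k")
      case True then show ?thesis using IH False by auto
    next
      case nR: False
      have "f k = 0" using z[of k] nR False Suc.prems by auto
      then show ?thesis using IH False nR by auto
    qed
  qed
qed

lemma arith_key:
  fixes T j :: int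
  assumes "4 * T \<le> j * (j - 1) + (j + 2) * (j + 1)"
  shows "2 * T \<le> (j + 1) * j"
proof -
  have "even ((j + 1) * j)" by simp
  then obtain q where q: "(j + 1) * j = 2 * q" by (metis evenE)
  have "j * (j - 1) + (j + 2) * (j + 1) = 2 * ((j + 1) * j) + 2" by (simp add: algebra_simps)
  then have "4 * T \<le> 4 * q + 2" using assms q by simp
  then have "T \<le> q" by presburger
  then show ?thesis using q by simp
qed

lemma step_inv:
  assumes inv: "Inv n x \<sigma>" and ms: "matching_step (pathE n \<sigma>) x y"
  shows "\<exists>\<sigma>'. Inv n y \<sigma>'"
proof -
  obtain M where Mm: "is_matching (pathE n \<sigma>) M"
    and keep: "\<And>u. (\<nexists>v. M u v) \<Longrightarrow> y u = x u"
    and sums: "\<And>u v. M u v \<Longrightarrow> y u + y v = x u + x v"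
    using ms unfolding matching_step_def by blast
  have Msym: "\<And>u v. M u v \<Longrightarrow> M v u" and ME: "\<And>u v. M u v \<Longrightarrow> pathE n \<sigma> u v"
    and Muniq: "\<And>u v v'. M u v \<Longrightarrow> M u v' \<Longrightarrow> v = v'"
    using Mm unfolding is_matching_def by blast+
  have bij: "bij_betw \<sigma> {..<n} {..<n}"
    and bnd: "\<And>k. k \<le> n \<Longrightarrow> 2 * PS x \<sigma> k \<le> int k * (int k - 1)"
    and tot: "2 * PS x \<sigma> n = int n * (int n - 1)"
    using inv unfolding Inv_def by blast+
  have inj: "inj_on \<sigma> {..<n}" and img: "\<sigma> ` {..<n} = {..<n}"
    using bij by (auto simp: bij_betw_def)
  have injD: "\<And>i j. i < n \<Longrightarrow> j < n \<Longrightarrow> \<sigma> i = \<sigma> j \<Longrightarrow> i = j"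
    using inj by (meson inj_onD lessThan_iff)
  define R where "R i \<longleftrightarrow> Suc i < n \<and> M (\<sigma> i) (\<sigma> (Suc i))" for i
  have Rd: "\<not> R (Suc i)" if "R i" for i
  proof
    assume "R (Suc i)"
    then have "Suc (Suc i) < n" "M (\<sigma> (Suc i)) (\<sigma> (Suc (Suc i)))" unfolding R_def by auto
    moreover have "M (\<sigma> (Suc i)) (\<sigma> i)" using that Msym unfolding R_def by blast
    ultimately have "\<sigma> i = \<sigma> (Suc (Suc i))" using Muniq by blast
    then have "i = Suc (Suc i)" using injD \<open>Suc (Suc i) < n\<close> by simp
    then show False by simp
  qed
  define f where "f i = int (y (\<sigma> i)) - int (x (\<sigma> i))" for i
  have Rp: "f i + f (Suc i) = 0" if "R i" for i
    using sums[of "\<sigma> i" "\<sigma> (Suc i)"] that unfolding R_def f_def by simp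
  have Rz: "f i = 0" if "i < n" "\<not> R i" "i = 0 \<or> \<not> R (i - 1)" for i
  proof -
    have "\<nexists>v. M (\<sigma> i) v"
    proof
      assume "\<exists>v. M (\<sigma> i) v"
      then obtain v where v: "M (\<sigma> i) v" by blast
      then have "pathE n \<sigma> (\<sigma> i) v" using ME by blast
      then obtain j where j: "Suc j < n" "(\<sigma> i = \<sigma> j \<and> v = \<sigma> (Suc j)) \<or> (v = \<sigma> j \<and> \<sigma> i = \<sigma> (Suc j))"
        unfolding pathE_def by blast
      show False
      proof (cases "\<sigma> i = \<sigma> j \<and> v = \<sigma> (Suc j)")
        case True
        then have "i = j" using injD that(1) j(1) by simp
        then show False using that(2) v True j(1) unfolding R_def by simp
      next
        case False
        then have h: "v = \<sigma> j" "\<sigma> i = \<sigma> (Suc j)" using j by auto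
        then have "i = Suc j" using injD that(1) j(1) by simp
        moreover have "M (\<sigma> j) (\<sigma> (Suc j))" using Msym v h by auto
        ultimately show False using that(3) j(1) unfolding R_def by simp
      qed
    qed
    then show ?thesis using keep unfolding f_def by simp
  qed
  have sumf: "k \<le> n \<Longrightarrow> (\<Sum>i<k. f i) = (if k > 0 \<and> R (k - 1) then f (k - 1) else 0)" for k
    using pair_sum[of R f n k] Rd Rp Rz by blast
  define S where "S i \<longleftrightarrow> R i \<and> y (\<sigma> (Suc i)) < y (\<sigma> i)" for i
  have Sd: "\<And>i. S i \<Longrightarrow> \<not> S (Suc i)" using Rd unfolding S_def by blast
  have SR: "\<And>i. S i \<Longrightarrow> Suc i < n" unfolding S_def R_def by blast
  define \<tau> where "\<tau> i = (if S i then Suc i else if i > 0 \<and> S (i - 1) then i - 1 else i)" for i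
  define \<sigma>' where "\<sigma>' = \<sigma> \<circ> \<tau>"
  have \<tau>in: "\<tau> i < n" if "i < n" for i
    using that SR unfolding \<tau>_def by auto
  have \<tau>inj: "inj_on \<tau> {..<n}"
  proof (rule inj_onI)
    fix i j assume "i \<in> {..<n}" "j \<in> {..<n}" "\<tau> i = \<tau> j"
    then show "i = j"
      unfolding \<tau>_def using Sd[of i] Sd[of j] Sd[of "i - 1"] Sd[of "j - 1"]
      by (auto split: if_splits)
  qed
  have \<sigma>'inj: "inj_on \<sigma>' {..<n}"
    unfolding \<sigma>'_def
    by (rule comp_inj_on[OF \<tau>inj]) (rule inj_on_subset[OF inj], use \<tau>in in auto)
  have \<sigma>'sub: "\<sigma>' ` {..<n} \<subseteq> {..<n}" using \<tau>in img unfolding \<sigma>'_def by auto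
  have \<sigma>'img: "\<sigma>' ` {..<n} = {..<n}"
    using endo_inj_surj[OF _ \<sigma>'sub \<sigma>'inj] by simp
  have bij': "bij_betw \<sigma>' {..<n} {..<n}" using \<sigma>'inj \<sigma>'img by (simp add: bij_betw_def)
  define g where "g i = int (y (\<sigma>' i)) - int (y (\<sigma> i))" for i
  have Sp: "g i + g (Suc i) = 0" if "S i" for i
  proof -
    have "\<tau> i = Suc i" using that unfolding \<tau>_def by simp
    moreover have "\<tau> (Suc i) = i" using that Sd[of i] unfolding \<tau>_def by simp
    ultimately show ?thesis unfolding g_def \<sigma>'_def by simp
  qed
  have Sz: "g i = 0" if "\<not> S i" "i = 0 \<or> \<not> S (i - 1)" for i
  proof -
    have "\<tau> i = i" using that unfolding \<tau>_def by auto
    then show ?thesis unfolding g_def \<sigma>'_def by simp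
  qed
  have sumg: "k \<le> n \<Longrightarrow> (\<Sum>i<k. g i) = (if k > 0 \<and> S (k - 1) then g (k - 1) else 0)" for k
    using pair_sum[of S g n k] Sd Sp Sz by blast
  have decomp: "PS y \<sigma>' k = PS x \<sigma> k + (\<Sum>i<k. f i) + (\<Sum>i<k. g i)" for k
    unfolding PS_def f_def g_def by (simp add: sum.distrib[symmetric])
  have newb: "2 * PS y \<sigma>' k \<le> int k * (int k - 1)" if "k \<le> n" for k
  proof (cases "k > 0 \<and> R (k - 1)")
    case True
    then obtain j where kj: "k = Suc j" and Rj: "R j" by (cases k) auto
    have jn: "Suc (Suc j) \<le> n" using Rj unfolding R_def by simp
    have Mj: "M (\<sigma> j) (\<sigma> (Suc j))" using Rj unfolding R_def by simp
    have ysum: "y (\<sigma> j) + y (\<sigma> (Suc j)) = x (\<sigma> j) + x (\<sigma> (Suc j))" using sums[OF Mj] .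
    have P1: "PS x \<sigma> (Suc j) = PS x \<sigma> j + int (x (\<sigma> j))" unfolding PS_def by simp
    have P2: "PS x \<sigma> (Suc (Suc j)) = PS x \<sigma> j + int (x (\<sigma> j)) + int (x (\<sigma> (Suc j)))"
      unfolding PS_def by simp
    have b1: "2 * PS x \<sigma> j \<le> int j * (int j - 1)" using bnd[of j] jn by simp
    have b2: "2 * PS x \<sigma> (Suc (Suc j)) \<le> (int j + 2) * (int j + 1)" using bnd[of "Suc (Suc j)"] jn
      by (simp add: algebra_simps)
    define T where "T = PS y \<sigma>' k"
    have Teq: "T = PS x \<sigma> j + (if S j then int (y (\<sigma> (Suc j))) else int (y (\<sigma> j)))"
    proof -
      have "T = PS x \<sigma> (Suc j) + f j + (if S j then g j else 0)"
        unfolding T_def using decomp[of k] sumf[OF that] sumg[OF that] kj Rj by simp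
      also have "\<dots> = PS x \<sigma> j + (if S j then int (y (\<sigma> (Suc j))) else int (y (\<sigma> j)))"
      proof (cases "S j")
        case True
        then have "\<tau> j = Suc j" unfolding \<tau>_def by simp
        then show ?thesis using True P1 unfolding f_def g_def \<sigma>'_def by simp
      next
        case False then show ?thesis using P1 unfolding f_def by simp
      qed
      finally show ?thesis .
    qed
    have "2 * (if S j then int (y (\<sigma> (Suc j))) else int (y (\<sigma> j)))
          \<le> int (x (\<sigma> j)) + int (x (\<sigma> (Suc j)))"
      using ysum Rj unfolding S_def by auto
    then have "4 * T \<le> int j * (int j - 1) + (int j + 2) * (int j + 1)"
      using Teq b1 b2 P2 by linarith
    then have "2 * T \<le> (int j + 1) * int j" by (rule arith_key)
    then show ?thesis unfolding T_def using kj by (simp add: algebra_simps)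
  next
    case False
    then have "\<not> (k > 0 \<and> S (k - 1))" unfolding S_def by blast
    then have "PS y \<sigma>' k = PS x \<sigma> k" using decomp[of k] sumf[OF that] sumg[OF that] False by auto
    then show ?thesis using bnd[OF that] by simp
  qed
  have newt: "2 * PS y \<sigma>' n = int n * (int n - 1)"
  proof -
    have "\<not> (n > 0 \<and> R (n - 1))" unfolding R_def by auto
    moreover then have "\<not> (n > 0 \<and> S (n - 1))" unfolding S_def by blast
    ultimately have "PS y \<sigma>' n = PS x \<sigma> n" using decomp[of n] sumf[of n] sumg[of n] by auto
    then show ?thesis using tot by simp
  qed
  show ?thesis unfolding Inv_def using bij' newb newt by blast
qed


definition advf :: "nat \<Rightarrow> (nat \<Rightarrow> nat) list \<Rightarrow> nat \<Rightarrow> nat \<Rightarrow> bool" where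
  "advf n h = (if \<exists>\<sigma>. Inv n (last h) \<sigma> then pathE n (SOME \<sigma>. Inv n (last h) \<sigma>) else pathE n id)"

lemma PS_id: "2 * PS (\<lambda>u. u) id k = int k * (int k - 1)"
  by (induction k) (auto simp: PS_def algebra_simps)

lemma Inv_id: "Inv n (\<lambda>u. u) id"
  unfolding Inv_def using PS_id by simp

lemma advf_conn: "connected_graph_on n (advf n h)"
proof (cases "\<exists>\<sigma>. Inv n (last h) \<sigma>")
  case True
  then have "Inv n (last h) (SOME \<sigma>. Inv n (last h) \<sigma>)" by (rule someI_ex)
  then show ?thesis using True pathE_conn unfolding advf_def Inv_def by simp
next
  case False
  then show ?thesis using pathE_conn[of id n] unfolding advf_def by auto
qed

lemma disc_bound:
  assumes "Inv n x \<sigma>" "n \<ge> 1"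
  shows "discrepancy n x \<ge> int n - 1"
proof -
  obtain m where m: "n = Suc m" using assms(2) by (cases n) auto
  have bij: "bij_betw \<sigma> {..<n} {..<n}"
    and bnd: "\<And>k. k \<le> n \<Longrightarrow> 2 * PS x \<sigma> k \<le> int k * (int k - 1)"
    and tot: "2 * PS x \<sigma> n = int n * (int n - 1)"
    using assms(1) unfolding Inv_def by blast+
  have "2 * PS x \<sigma> 1 \<le> 0" using bnd[of 1] m by simp
  then have z: "x (\<sigma> 0) = 0" unfolding PS_def by simp
  have "2 * PS x \<sigma> m \<le> int m * (int m - 1)" using bnd[of m] m by simp
  moreover have "PS x \<sigma> n = PS x \<sigma> m + int (x (\<sigma> m))" unfolding PS_def m by simp
  ultimately have "2 * int (x (\<sigma> m)) \<ge> int n * (int n - 1) - int m * (int m - 1)" using tot by linarith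
  moreover have "int n * (int n - 1) - int m * (int m - 1) = 2 * int m" using m by (simp add: algebra_simps)
  ultimately have big: "int (x (\<sigma> m)) \<ge> int m" by linarith
  have in1: "\<sigma> 0 < n" "\<sigma> m < n" using bij m unfolding bij_betw_def by auto
  have fin: "finite {int (x u) - int (x v) | u v. u < n \<and> v < n}"
    by (rule finite_image_set2) auto
  have "int (x (\<sigma> m)) - int (x (\<sigma> 0)) \<in> {int (x u) - int (x v) | u v. u < n \<and> v < n}"
    using in1 by blast
  then have "int (x (\<sigma> m)) - int (x (\<sigma> 0)) \<le> discrepancy n x"
    unfolding discrepancy_def using fin by (rule Max_ge[rotated])
  then show ?thesis using z big m by simp
qed

theorem theorem2:
  fixes n :: nat
  assumes "n \<ge> 1"
  shows "\<exists>(w0 :: nat \<Rightarrow> nat) (adv :: (nat \<Rightarrow> nat) list \<Rightarrow> (nat \<Rightarrow> nat \<Rightarrow> bool)).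
           (\<forall>h. connected_graph_on n (adv h)) \<and>
           (\<forall>w. execution n adv w0 w \<longrightarrow> (\<forall>t. discrepancy n (w t) \<ge> int n - 1))"
proof (intro exI[of _ "\<lambda>u. u"] exI[of _ "advf n"] conjI allI impI)
  fix h show "connected_graph_on n (advf n h)" by (rule advf_conn)
next
  fix w t assume ex: "execution n (advf n) (\<lambda>u. u) w"
  have w0: "w 0 = (\<lambda>u. u)" and st: "\<And>t. matching_step (advf n (load_history w t)) (w t) (w (Suc t))"
    using ex unfolding execution_def by blast+
  have "\<exists>\<sigma>. Inv n (w t) \<sigma>"
  proof (induction t)
    case 0 then show ?case using Inv_id w0 by auto
  next
    case (Suc t)
    have l: "last (load_history w t) = w t" unfolding load_history_def by simp
    have I: "Inv n (w t) (SOME \<sigma>. Inv n (w t) \<sigma>)" using Suc.IH by (rule someI_ex)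
    have "advf n (load_history w t) = pathE n (SOME \<sigma>. Inv n (w t) \<sigma>)"
      unfolding advf_def l using Suc.IH by simp
    then have "matching_step (pathE n (SOME \<sigma>. Inv n (w t) \<sigma>)) (w t) (w (Suc t))" using st[of t] by simp
    then show ?case using step_inv[OF I] by blast
  qed
  then obtain \<sigma> where "Inv n (w t) \<sigma>" by blast
  then show "discrepancy n (w t) \<ge> int n - 1" using disc_bound assms by blast
qed

end
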